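(* Let $X,\partial X$ be Banach spaces, $A_m:D(A_m)\subseteq X\to X$ closed and densely defined, and $L,\Phi\in\mathcal{L}([D(A_m)],\partial X)$ surjective, such that $A:=A_m|_{\ker L}$ generates a $C_0$-semigroup on $X$. Suppose that $G:=A_m|_{\ker\Phi}$ generates a $C_0$-semigroup on $X$, where $\Phi=\Phi_0+V L$ for some $\Phi_0\in\mathcal{L}([D(A_m)],\partial X)$ and some non-invertible $V\in\mathcal{L}(\partial X)$. If $\dim\partial X<\infty$, then \[ \lim_{\lambda\to+\infty}\|L\|_\lambda\cdot\|\Phi_0L_\lambda\|=+\infty. \]
   Context: $[D(A_m)]$ denotes $D(A_m)$ with the graph norm $\|f\|+\|A_mf\|$. For $\lambda\in\rho(A)$, the restriction $L|_{\ker(\lambda-A_m)}:\ker(\lambda-A_m)\to\partial X$ is invertible, and $L_\lambda:=(L|_{\ker(\lambda-A_m)})^{-1}\in\mathcal{L}(\partial X,X)$ (the abstract Dirichlet operator); $\Phi_0L_\lambda\in\mathcal{L}(\partial X)$. Further $\|L\|_\lambda$ denotes the norm of $L$ as an operator from $(\ker(\lambda-A_m),\|\cdot\|_X)$ to $\partial X$ (finite for $\lambda\in\rho(A)$). *)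

theory Defs
  imports "HOL-Analysis.Analysis"
begin

text \<open>Unbounded operators are given by a domain D and a map Am (values outside D irrelevant).
  Spaces are real Banach spaces.\<close>

definition closed_dd_operator :: "'a::banach set \<Rightarrow> ('a \<Rightarrow> 'a) \<Rightarrow> bool" where
  "closed_dd_operator D Am \<longleftrightarrow>
     subspace D \<and> (\<forall>x\<in>D. \<forall>y\<in>D. \<forall>c. Am (x + y) = Am x + Am y \<and> Am (c *\<^sub>R x) = c *\<^sub>R Am x)
     \<and> closed {(x, Am x) | x. x \<in> D} \<and> closure D = UNIV"

text \<open>Bounded linear operators from D with the graph norm of Am into a normed space.\<close>
definition graph_bounded :: "'a::real_normed_vector set \<Rightarrow> ('a \<Rightarrow> 'a) \<Rightarrow> ('a \<Rightarrow> 'b::real_normed_vector) \<Rightarrow> bool" where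
  "graph_bounded D Am L \<longleftrightarrow>
     (\<forall>x\<in>D. \<forall>y\<in>D. \<forall>c. L (x + y) = L x + L y \<and> L (c *\<^sub>R x) = c *\<^sub>R L x)
     \<and> (\<exists>C. \<forall>x\<in>D. norm (L x) \<le> C * (norm x + norm (Am x)))"

definition C0_semigroup :: "(real \<Rightarrow> 'a::banach \<Rightarrow> 'a) \<Rightarrow> bool" where
  "C0_semigroup T \<longleftrightarrow>
     (\<forall>t\<ge>0. bounded_linear (T t)) \<and> T 0 = id
     \<and> (\<forall>s\<ge>0. \<forall>t\<ge>0. T (s + t) = T s \<circ> T t)
     \<and> (\<forall>x. ((\<lambda>t. T t x) \<longlongrightarrow> x) (at_right 0))"

definition generates :: "'a::banach set \<Rightarrow> ('a \<Rightarrow> 'a) \<Rightarrow> bool" where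
  "generates D B \<longleftrightarrow> (\<exists>T. C0_semigroup T
     \<and> D = {x. \<exists>y. ((\<lambda>h. (1 / h) *\<^sub>R (T h x - x)) \<longlongrightarrow> y) (at_right 0)}
     \<and> (\<forall>x\<in>D. ((\<lambda>h. (1 / h) *\<^sub>R (T h x - x)) \<longlongrightarrow> B x) (at_right 0)))"

definition resolvent_set :: "'a::banach set \<Rightarrow> ('a \<Rightarrow> 'a) \<Rightarrow> real set" where
  "resolvent_set D B = {lam. \<exists>R. bounded_linear R \<and> (\<forall>y. R y \<in> D \<and> lam *\<^sub>R R y - B (R y) = y)
       \<and> (\<forall>x\<in>D. R (lam *\<^sub>R x - B x) = x)}"

text \<open>Abstract Dirichlet operator L_lambda: inverse of L restricted to ker(lambda - Am).\<close>
definition dirichlet_op :: "'a set \<Rightarrow> ('a \<Rightarrow> 'a::real_vector) \<Rightarrow> ('a \<Rightarrow> 'b) \<Rightarrow> real \<Rightarrow> 'b \<Rightarrow> 'a" where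
  "dirichlet_op D Am L lam y = (THE x. x \<in> D \<and> Am x = lam *\<^sub>R x \<and> L x = y)"

definition norm_L_lambda :: "'a set \<Rightarrow> ('a \<Rightarrow> 'a::real_normed_vector) \<Rightarrow> ('a \<Rightarrow> 'b::real_normed_vector) \<Rightarrow> real \<Rightarrow> real" where
  "norm_L_lambda D Am L lam = Sup ((\<lambda>x. norm (L x) / norm x) ` {x \<in> D. Am x = lam *\<^sub>R x})"

end

theory Submission
  imports Defs "HOL-Real_Asymp.Real_Asymp"
begin

lemma fd_induct:
  fixes S :: "'b::real_normed_vector set"
  assumes "finite S"
  shows "closed (span S) \<and> (\<forall>f::'b \<Rightarrow> 'c::real_normed_vector. linear f \<longrightarrow> (\<exists>K. \<forall>w\<in>span S. norm (f w) \<le> K * norm w))"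
  using assms
proof (induction S rule: finite_induct)
  case empty
  then show ?case by (auto simp: linear_0)
next
  case (insert v S)
  show ?case
  proof (cases "v \<in> span S")
    case True
    then have "span (insert v S) = span S" by (rule span_redundant)
    then show ?thesis using insert.IH by simp
  next
    case False
    define d where "d = infdist v (span S)"
    have cl: "closed (span S)" using insert.IH by (rule conjunct1)
    have "span S \<noteq> {}" using span_zero by blast
    then have "d \<noteq> 0" using in_closed_iff_infdist_zero[OF cl, of v] False unfolding d_def by simp
    moreover have "d \<ge> 0" unfolding d_def by (rule infdist_nonneg)
    ultimately have dpos: "d > 0" by simp
    have key: "\<bar>c\<bar> * d \<le> norm x" if "x - c *\<^sub>R v \<in> span S" for x c
    proof (cases "c = 0")
      case True then show ?thesis by simp
    next
      case False
      have a: "- (1/c) *\<^sub>R (x - c *\<^sub>R v) \<in> span S" using that span_scale by blast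
      have "v - (- (1/c) *\<^sub>R (x - c *\<^sub>R v)) = (1/c) *\<^sub>R x"
        using False by (simp add: algebra_simps)
      then have "dist v (- (1/c) *\<^sub>R (x - c *\<^sub>R v)) = norm x / \<bar>c\<bar>"
        by (simp add: dist_norm)
      then have "d \<le> norm x / \<bar>c\<bar>" using infdist_le[OF a, of v] d_def by simp
      then show ?thesis using False by (simp add: field_simps)
    qed
    have bnd: "\<exists>K. \<forall>w\<in>span (insert v S). norm (f w) \<le> K * norm w" if lf: "linear f" for f :: "'b \<Rightarrow> 'c"
    proof -
      obtain K where K: "\<forall>w\<in>span S. norm (f w) \<le> K * norm w" using insert.IH lf by blast
      define K' where "K' = \<bar>K\<bar> + (\<bar>K\<bar> * norm v + norm (f v)) / d"
      have "norm (f w) \<le> K' * norm w" if w: "w \<in> span (insert v S)" for w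
      proof -
        obtain c where c: "w - c *\<^sub>R v \<in> span S" using w span_insert by blast
        have cb: "\<bar>c\<bar> \<le> norm w / d" using key[OF c] dpos by (simp add: field_simps)
        have "f w = f (w - c *\<^sub>R v) + c *\<^sub>R f v" using lf by (simp add: linear_diff linear_scale)
        then have "norm (f w) \<le> norm (f (w - c *\<^sub>R v)) + norm (c *\<^sub>R f v)"
          using norm_triangle_ineq by metis
        then have "norm (f w) \<le> norm (f (w - c *\<^sub>R v)) + \<bar>c\<bar> * norm (f v)"
          by simp
        moreover have "norm (f (w - c *\<^sub>R v)) \<le> \<bar>K\<bar> * norm (w - c *\<^sub>R v)"
        proof -
          have "norm (f (w - c *\<^sub>R v)) \<le> K * norm (w - c *\<^sub>R v)" using K c by blast
          also have "\<dots> \<le> \<bar>K\<bar> * norm (w - c *\<^sub>R v)" by (intro mult_right_mono) auto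
          finally show ?thesis .
        qed
        moreover have "\<bar>K\<bar> * norm (w - c *\<^sub>R v) \<le> \<bar>K\<bar> * (norm w + \<bar>c\<bar> * norm v)"
          using norm_triangle_ineq4[of w "c *\<^sub>R v"] by (intro mult_left_mono) auto
        ultimately have "norm (f w) \<le> \<bar>K\<bar> * (norm w + \<bar>c\<bar> * norm v) + \<bar>c\<bar> * norm (f v)"
          by linarith
        also have "\<dots> = \<bar>K\<bar> * norm w + \<bar>c\<bar> * (\<bar>K\<bar> * norm v + norm (f v))"
          by (simp add: algebra_simps)
        also have "\<dots> \<le> \<bar>K\<bar> * norm w + (norm w / d) * (\<bar>K\<bar> * norm v + norm (f v))"
          using cb by (intro add_left_mono mult_right_mono) auto
        also have "\<dots> = K' * norm w" unfolding K'_def by (simp add: algebra_simps add_divide_distrib)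
        finally show ?thesis .
      qed
      then show ?thesis by blast
    qed
    have "closed (span (insert v S))"
    proof (rule closed_sequential_limits[THEN iffD2], intro allI impI, elim conjE)
      fix x l assume xin: "\<forall>n. x n \<in> span (insert v S)" and xl: "x \<longlonglongrightarrow> l"
      have "\<forall>n. \<exists>c. x n - c *\<^sub>R v \<in> span S" using xin span_insert by blast
      then obtain c where c: "\<And>n. x n - c n *\<^sub>R v \<in> span S" by metis
      have cd: "\<bar>c m - c n\<bar> * d \<le> norm (x m - x n)" for m n
      proof -
        have "(x m - x n) - (c m - c n) *\<^sub>R v = (x m - c m *\<^sub>R v) - (x n - c n *\<^sub>R v)"
          by (simp add: algebra_simps)
        then have "(x m - x n) - (c m - c n) *\<^sub>R v \<in> span S" using c span_diff by metis
        then show ?thesis by (rule key)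
      qed
      have xC: "Cauchy x" using xl by (rule LIMSEQ_imp_Cauchy)
      have "Cauchy c"
      proof (rule metric_CauchyI)
        fix e :: real assume e: "e > 0"
        have ed: "e * d > 0" using e dpos by simp
        obtain M where M: "\<forall>m\<ge>M. \<forall>n\<ge>M. dist (x m) (x n) < e * d"
          using xC[unfolded Cauchy_def, rule_format, OF ed] by blast
        show "\<exists>M. \<forall>m\<ge>M. \<forall>n\<ge>M. dist (c m) (c n) < e"
        proof (intro exI allI impI)
          fix m n assume "m \<ge> M" "n \<ge> M"
          then have "norm (x m - x n) < e * d" using M by (simp add: dist_norm)
          then have "\<bar>c m - c n\<bar> * d < e * d" using cd[of m n] by linarith
          then show "dist (c m) (c n) < e" using dpos by (simp add: dist_real_def)
        qed
      qed
      then obtain cl where ccl: "c \<longlonglongrightarrow> cl" using Cauchy_convergent_iff convergent_def by blast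
      have "(\<lambda>n. x n - c n *\<^sub>R v) \<longlonglongrightarrow> l - cl *\<^sub>R v"
        by (intro tendsto_intros xl ccl)
      then have "l - cl *\<^sub>R v \<in> span S"
        proof -
        have "\<forall>x l. (\<forall>n. x n \<in> span S) \<and> x \<longlonglongrightarrow> l \<longrightarrow> l \<in> span S"
          using cl unfolding closed_sequential_limits .
        then show ?thesis using c \<open>(\<lambda>n. x n - c n *\<^sub>R v) \<longlonglongrightarrow> l - cl *\<^sub>R v\<close>
          by (metis (no_types, lifting))
      qed
      then show "l \<in> span (insert v S)" using span_insert by blast
    qed
    then show ?thesis using bnd by blast
  qed
qed

lemma fd_bounded_linear:
  fixes f :: "'b::real_normed_vector \<Rightarrow> 'c::real_normed_vector"
  assumes "finite (S::'b set)" "span S = UNIV" "linear f"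
  shows "bounded_linear f"
proof -
  obtain K where K: "\<forall>w\<in>span S. norm (f w) \<le> K * norm w" using fd_induct[OF assms(1)] assms(3) by blast
  show ?thesis
  proof (rule bounded_linear_intro[of f K])
    show "f (x + y) = f x + f y" for x y using assms(3) by (simp add: linear_add)
    show "f (r *\<^sub>R x) = r *\<^sub>R f x" for r x using assms(3) by (simp add: linear_scale)
    show "norm (f x) \<le> norm x * K" for x using K assms(2) by (simp add: mult.commute)
  qed
qed

lemma fd_closed_range:
  fixes V :: "'b::real_normed_vector \<Rightarrow> 'c::real_normed_vector"
  assumes "finite (S::'b set)" "span S = UNIV" "linear V"
  shows "closed (range V)"
proof -
  have "range V = span (V ` S)" using span_linear_image[OF assms(3), of S] assms(2) by simp
  then show ?thesis using fd_induct[of "V ` S"] assms(1) by auto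
qed

lemma fd_surj_inj:
  fixes V :: "'b::real_normed_vector \<Rightarrow> 'b"
  assumes S: "finite (S::'b set)" "span S = UNIV" and lV: "linear V" and sV: "surj V"
  shows "inj V"
proof -
  obtain B :: "'b set" where B: "independent B" "UNIV \<subseteq> span B"
    by (rule basis_exists[of "UNIV :: 'b set"])
  have fB: "finite B" using independent_span_bound[OF S(1) B(1)] S(2) by auto
  interpret fd: finite_dimensional_vector_space "scaleR :: real \<Rightarrow> 'b \<Rightarrow> 'b" B
    by unfold_locales (use fB B in \<open>auto simp: span_raw_def dependent_raw_def\<close>)
  have "Vector_Spaces.linear (*\<^sub>R) (*\<^sub>R) V" using lV by (simp add: linear_def)
  then show ?thesis by (rule fd.linear_surj_imp_inj[OF _ sV])
qed

lemma ubp: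
  fixes Tn :: "nat \<Rightarrow> 'a::banach \<Rightarrow> 'c::real_normed_vector"
  assumes bl: "\<And>i. bounded_linear (Tn i)" and pw: "\<And>x. \<exists>M. \<forall>i. norm (Tn i x) \<le> M"
  shows "\<exists>M. \<forall>i x. norm (Tn i x) \<le> M * norm x"
proof -
  define F where "F k = {x. \<forall>i. norm (Tn i x) \<le> real k}" for k :: nat
  have clF: "closed (F k)" for k
  proof -
    have "F k = (\<Inter>i. {x. norm (Tn i x) \<le> real k})" unfolding F_def by auto
    moreover have "closed {x. norm (Tn i x) \<le> real k}" for i
      by (intro closed_Collect_le continuous_intros linear_continuous_on[OF bl])
    ultimately show ?thesis by auto
  qed
  have UF: "\<Union> (range F) = UNIV"
  proof safe
    fix x :: 'a
    obtain M where M: "\<forall>i. norm (Tn i x) \<le> M" using pw by blast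
    obtain k :: nat where "M \<le> real k" using real_arch_simple by blast
    then have "x \<in> F k" using M unfolding F_def by (auto intro: order_trans)
    then show "x \<in> \<Union> (range F)" by blast
  qed simp
  have "\<exists>k. interior (F k) \<noteq> {}"
  proof (rule ccontr)
    assume "\<not> ?thesis"
    then have "euclidean interior_of \<Union> (range F) = {}"
      by (intro Baire_category_alt) (auto simp: completely_metrizable_space_euclidean clF closed_closedin[symmetric])
    then show False using UF by simp
  qed
  then obtain k x0 where "x0 \<in> interior (F k)" by blast
  then obtain r where r0: "r > 0" "ball x0 r \<subseteq> interior (F k)"
    using open_contains_ball_eq[OF open_interior] by blast
  then have r: "r > 0" "ball x0 r \<subseteq> F k" using interior_subset by blast+
  have small: "norm (Tn i y) \<le> 2 * real k" if "norm y < r" for i y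
  proof -
    have "x0 + y \<in> F k" using r that by (auto simp: dist_norm)
    moreover have "x0 \<in> F k" using r by auto
    ultimately have "norm (Tn i (x0 + y)) \<le> real k" "norm (Tn i x0) \<le> real k" unfolding F_def by auto
    moreover have "Tn i y = Tn i (x0 + y) - Tn i x0" using bounded_linear.linear[OF bl] by (simp add: linear_add)
    ultimately show ?thesis using norm_triangle_ineq4[of "Tn i (x0 + y)" "Tn i x0"] by simp
  qed
  have "norm (Tn i x) \<le> (4 * real k / r) * norm x" for i x
  proof (cases "x = 0")
    case True then show ?thesis using bounded_linear.linear[OF bl] by (simp add: linear_0)
  next
    case False
    define y where "y = (r / (2 * norm x)) *\<^sub>R x"
    have ny: "norm y = r / 2" using False r unfolding y_def by simp
    have "Tn i y = (r / (2 * norm x)) *\<^sub>R Tn i x" unfolding y_def using bounded_linear.linear[OF bl] by (simp add: linear_scale)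
    then have "norm (Tn i y) = (r / (2 * norm x)) * norm (Tn i x)" using r by simp
    moreover have "norm (Tn i y) \<le> 2 * real k" using small ny r by simp
    ultimately have "(r / (2 * norm x)) * norm (Tn i x) \<le> 2 * real k" by simp
    then show ?thesis using False r by (simp add: field_simps)
  qed
  then show ?thesis by blast
qed

lemma sg_bl: "C0_semigroup T \<Longrightarrow> t \<ge> 0 \<Longrightarrow> bounded_linear (T t)"
  unfolding C0_semigroup_def by blast

lemma sg_lin: "C0_semigroup T \<Longrightarrow> t \<ge> 0 \<Longrightarrow> linear (T t)"
  using sg_bl bounded_linear.linear by blast

lemma sg_zero: "C0_semigroup T \<Longrightarrow> T 0 x = x"
  unfolding C0_semigroup_def by simp

lemma sg_shift: "C0_semigroup T \<Longrightarrow> s \<ge> 0 \<Longrightarrow> h \<ge> 0 \<Longrightarrow> T (s + h) x = T s (T h x)"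
  unfolding C0_semigroup_def by (metis comp_apply)

lemma sg_right:
  assumes "C0_semigroup T" "e > 0"
  shows "\<exists>d>0. \<forall>h. 0 \<le> h \<and> h < d \<longrightarrow> norm (T h x - x) < e"
proof -
  have "((\<lambda>t. T t x) \<longlongrightarrow> x) (at_right 0)" using assms(1) unfolding C0_semigroup_def by blast
  then have "eventually (\<lambda>t. dist (T t x) x < e) (at_right 0)" using assms(2) unfolding tendsto_iff by blast
  then obtain b where b: "b > 0" "\<forall>y>0. y < b \<longrightarrow> dist (T y x) x < e"
    unfolding eventually_at_right_field by auto
  show ?thesis
  proof (intro exI[of _ b] conjI allI impI)
    fix h assume h: "0 \<le> h \<and> h < b"
    show "norm (T h x - x) < e"
    proof (cases "h = 0")
      case True then show ?thesis using sg_zero[OF assms(1)] assms(2) by simp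
    next
      case False then show ?thesis using b h by (simp add: dist_norm)
    qed
  qed (use b in auto)
qed

lemma sg_local_bound:
  assumes T: "C0_semigroup T"
  shows "\<exists>d>0. \<exists>M\<ge>1. \<forall>t. 0 \<le> t \<and> t \<le> d \<longrightarrow> (\<forall>x. norm (T t x) \<le> M * norm x)"
proof (rule ccontr)
  assume neg: "\<not> ?thesis"
  have "\<forall>n::nat. \<exists>t x. 0 \<le> t \<and> t \<le> 1 / real (Suc n) \<and> norm (T t x) > (real n + 1) * norm x"
  proof
    fix n :: nat
    have "\<not> (\<forall>t. 0 \<le> t \<and> t \<le> 1 / real (Suc n) \<longrightarrow> (\<forall>x. norm (T t x) \<le> (real n + 1) * norm x))"
    proof
      assume a: "\<forall>t. 0 \<le> t \<and> t \<le> 1 / real (Suc n) \<longrightarrow> (\<forall>x. norm (T t x) \<le> (real n + 1) * norm x)"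
      have "1 / real (Suc n) > 0" by simp
      moreover have "real n + 1 \<ge> 1" by simp
      ultimately show False using neg a by blast
    qed
    then show "\<exists>t x. 0 \<le> t \<and> t \<le> 1 / real (Suc n) \<and> norm (T t x) > (real n + 1) * norm x"
      by (auto simp: not_le)
  qed
  then obtain t x where tx: "\<And>n. 0 \<le> t n" "\<And>n. t n \<le> 1 / real (Suc n)"
    "\<And>n. norm (T (t n) (x n)) > (real n + 1) * norm (x n)"
    by metis
  have pw: "\<exists>M. \<forall>n. norm (T (t n) y) \<le> M" for y
  proof -
    obtain d where d: "d > 0" "\<forall>h. 0 \<le> h \<and> h < d \<longrightarrow> norm (T h y - y) < 1"
      using sg_right[OF T, of 1 y] by auto
    obtain N :: nat where N: "1 / d < real N" using reals_Archimedean2 by blast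
    define M where "M = norm y + 1 + (\<Sum>k<N. norm (T (t k) y))"
    have "norm (T (t n) y) \<le> M" for n
    proof (cases "n < N")
      case True
      have "norm (T (t n) y) \<le> (\<Sum>k<N. norm (T (t k) y))"
        using True by (intro member_le_sum) auto
      moreover have "norm y + 1 \<ge> 0" by simp
      ultimately show ?thesis unfolding M_def by linarith
    next
      case False
      have "1 / real (Suc n) < d"
      proof -
        have "1 / d < real (Suc n)" using N False by simp
        then show ?thesis using d(1) by (simp add: field_simps)
      qed
      then have "t n < d" using tx(2)[of n] by linarith
      then have "norm (T (t n) y - y) < 1" using d tx(1)[of n] by blast
      then have "norm (T (t n) y) \<le> norm y + 1" using norm_triangle_ineq2[of "T (t n) y" y] by linarith
      moreover have "0 \<le> (\<Sum>k<N. norm (T (t k) y))" by (intro sum_nonneg) auto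
      ultimately show ?thesis unfolding M_def by linarith
    qed
    then show ?thesis by blast
  qed
  obtain M where M: "\<forall>n y. norm (T (t n) y) \<le> M * norm y"
    using ubp[of "\<lambda>n. T (t n)"] sg_bl[OF T tx(1)] pw by blast
  obtain n :: nat where n: "M \<le> real n" using real_arch_simple by blast
  have "norm (T (t n) (x n)) \<le> M * norm (x n)" using M by blast
  also have "\<dots> \<le> (real n + 1) * norm (x n)" using n by (intro mult_right_mono) auto
  finally show False using tx(3)[of n] by simp
qed

lemma sg_iter:
  assumes T: "C0_semigroup T" and d: "d > 0" and M: "M \<ge> 1"
    and loc: "\<forall>t. 0 \<le> t \<and> t \<le> d \<longrightarrow> (\<forall>x. norm (T t x) \<le> M * norm x)"
  shows "0 \<le> r \<Longrightarrow> r \<le> d \<Longrightarrow> norm (T (real k * d + r) x) \<le> M ^ (k + 1) * norm x"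
proof (induction k arbitrary: x)
  case 0 then show ?case using loc by simp
next
  case (Suc k)
  have "T (real (Suc k) * d + r) x = T d (T (real k * d + r) x)"
    using sg_shift[OF T, of d "real k * d + r" x] Suc.prems d by (simp add: algebra_simps)
  then have "norm (T (real (Suc k) * d + r) x) \<le> M * norm (T (real k * d + r) x)"
    using loc d by simp
  also have "\<dots> \<le> M * (M ^ (k + 1) * norm x)"
    using Suc.IH[OF Suc.prems] M by (intro mult_left_mono) auto
  finally show ?case by simp
qed

lemma sg_exp_bound:
  assumes T: "C0_semigroup T"
  shows "\<exists>M w. M \<ge> 1 \<and> w > 0 \<and> (\<forall>t\<ge>0. \<forall>x. norm (T t x) \<le> M * exp (w * t) * norm x)"
proof -
  obtain d M where d: "d > 0" and M: "M \<ge> 1" and loc: "\<forall>t. 0 \<le> t \<and> t \<le> d \<longrightarrow> (\<forall>x. norm (T t x) \<le> M * norm x)"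
    using sg_local_bound[OF T] by blast
  define w where "w = ln M / d + 1"
  have lnM: "ln M \<ge> 0" using M by simp
  have w: "w > 0" unfolding w_def using lnM d by (simp add: add_nonneg_pos)
  have "norm (T t x) \<le> M * exp (w * t) * norm x" if t: "t \<ge> 0" for t x
  proof -
    define k where "k = nat \<lfloor>t / d\<rfloor>"
    have kt: "real k \<le> t / d" unfolding k_def using t d by (simp add: of_nat_nat)
    have kt2: "t / d < real k + 1"
    proof -
      have "t / d < real_of_int \<lfloor>t / d\<rfloor> + 1" by linarith
      moreover have "real_of_int \<lfloor>t / d\<rfloor> = real k" unfolding k_def using t d by simp
      ultimately show ?thesis by linarith
    qed
    define r where "r = t - real k * d"
    have r: "0 \<le> r" "r \<le> d" unfolding r_def using kt kt2 d by (auto simp: field_simps)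
    have "norm (T t x) = norm (T (real k * d + r) x)" unfolding r_def by simp
    also have "\<dots> \<le> M ^ (k + 1) * norm x" using sg_iter[OF T d M loc r] .
    also have "M ^ (k + 1) = M * exp (real k * ln M)"
      using M by (simp add: exp_of_nat_mult)
    also have "exp (real k * ln M) \<le> exp (w * t)"
    proof -
      have "real k * ln M \<le> (t / d) * ln M" using kt lnM by (intro mult_right_mono)
      also have "\<dots> = (ln M / d) * t" by simp
      also have "\<dots> \<le> w * t" unfolding w_def using t by (intro mult_right_mono) auto
      finally show ?thesis by simp
    qed
    then have "M * exp (real k * ln M) * norm x \<le> M * exp (w * t) * norm x"
      using M by (intro mult_right_mono mult_left_mono) auto
    finally show ?thesis by simp
  qed
  then show ?thesis using M w by blast
qed

lemma sg_cont:
  assumes T: "C0_semigroup T"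
  shows "continuous_on {0..} (\<lambda>t. T t x)"
proof -
  obtain M w where M: "M \<ge> 1" and w: "w > 0" and bd: "\<forall>t\<ge>0. \<forall>x. norm (T t x) \<le> M * exp (w * t) * norm x"
    using sg_exp_bound[OF T] by blast
  show ?thesis
    unfolding continuous_on_iff
  proof (intro ballI allI impI)
    fix t0 :: real and e :: real assume t0: "t0 \<in> {0..}" and e: "e > 0"
    define K where "K = M * exp (w * t0)"
    have K: "K > 0" unfolding K_def using M by simp
    obtain d where d: "d > 0" "\<forall>h. 0 \<le> h \<and> h < d \<longrightarrow> norm (T h x - x) < e / K"
      using sg_right[OF T, of "e / K" x] e K by auto
    show "\<exists>d>0. \<forall>s\<in>{0..}. dist s t0 < d \<longrightarrow> dist (T s x) (T t0 x) < e"
    proof (intro exI[of _ d] conjI ballI impI)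
      fix s :: real assume s: "s \<in> {0..}" "dist s t0 < d"
      show "dist (T s x) (T t0 x) < e"
      proof (cases "s \<ge> t0")
        case True
        have eq: "T s x - T t0 x = T t0 (T (s - t0) x - x)"
          using sg_shift[OF T, of t0 "s - t0" x] t0 True sg_lin[OF T, of t0]
          by (simp add: linear_diff)
        have "norm (T t0 (T (s - t0) x - x)) \<le> K * norm (T (s - t0) x - x)"
          using bd t0 unfolding K_def by auto
        also have "\<dots> < K * (e / K)"
          using d s True K by (intro mult_strict_left_mono) (auto simp: dist_real_def)
        finally show ?thesis using eq K by (simp add: dist_norm)
      next
        case False
        have eq: "T s x - T t0 x = T s (x - T (t0 - s) x)"
          using sg_shift[OF T, of s "t0 - s" x] s False sg_lin[OF T, of s]
          by (simp add: linear_diff)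
        have "norm (T s (x - T (t0 - s) x)) \<le> M * exp (w * s) * norm (x - T (t0 - s) x)"
          using bd s by auto
        also have "\<dots> \<le> K * norm (x - T (t0 - s) x)"
          unfolding K_def using False w M by (intro mult_right_mono mult_left_mono) auto
        also have "\<dots> < K * (e / K)"
          using d s False K by (intro mult_strict_left_mono) (auto simp: dist_real_def norm_minus_commute)
        finally show ?thesis using eq K by (simp add: dist_norm)
      qed
    qed (use d in auto)
  qed
qed

lemma exp_has_integral:
  fixes k :: real
  assumes k: "k > 0" and ab: "a \<le> b"
  shows "((\<lambda>t. exp (- k * t)) has_integral (exp (- k * a) - exp (- k * b)) / k) {a..b}"
proof -
  have "((\<lambda>t. exp (- k * t)) has_integral ((- exp (- k * b) / k) - (- exp (- k * a) / k))) {a..b}"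
  proof (rule fundamental_theorem_of_calculus[OF ab])
    fix x assume "x \<in> {a..b}"
    have "((\<lambda>t. - exp (- k * t) / k) has_real_derivative exp (- k * x)) (at x within {a..b})"
      using k by (auto intro!: derivative_eq_intros simp: field_simps)
    then show "((\<lambda>t. - exp (- k * t) / k) has_vector_derivative exp (- k * x)) (at x within {a..b})"
      by (simp add: has_real_derivative_iff_has_vector_derivative)
  qed
  then show ?thesis by (simp add: field_simps diff_divide_distrib)
qed

lemma cexp_has_integral:
  fixes k :: real
  assumes k: "k > 0" and ab: "a \<le> b"
  shows "((\<lambda>t. C * exp (- k * t)) has_integral C * ((exp (- k * a) - exp (- k * b)) / k)) {a..b}"
  using has_integral_mult_right[OF exp_has_integral[OF k ab], of C] by simp

lemma tail_bound:
  fixes f :: "real \<Rightarrow> 'a::banach"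
  assumes cont: "continuous_on {0..} f" and k: "k > 0"
    and bd: "\<And>t. t \<ge> 0 \<Longrightarrow> norm (f t) \<le> C * exp (- k * t)"
    and ab: "0 \<le> a" "a \<le> b"
  shows "norm (integral {0..b} f - integral {0..a} f) \<le> C * exp (- k * a) / k"
proof -
  have int: "f integrable_on {0..b}"
    using cont ab by (intro integrable_continuous_interval) (auto intro: continuous_on_subset)
  have "integral {0..a} f + integral {a..b} f = integral {0..b} f"
    using Henstock_Kurzweil_Integration.integral_combine[OF ab int] .
  then have eq: "integral {0..b} f - integral {0..a} f = integral {a..b} f" by (simp add: algebra_simps)
  have inta: "f integrable_on {a..b}"
    using cont ab by (intro integrable_continuous_interval) (auto intro: continuous_on_subset)
  have "norm (integral {a..b} f) \<le> integral {a..b} (\<lambda>t. C * exp (- k * t))"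
    using inta cexp_has_integral[OF k ab(2), of C] bd ab
    by (intro integral_norm_bound_integral) (auto intro: has_integral_integrable)
  also have "\<dots> = C * ((exp (- k * a) - exp (- k * b)) / k)"
    using cexp_has_integral[OF k ab(2), of C] by (rule integral_unique)
  also have "\<dots> \<le> C * exp (- k * a) / k"
  proof -
    have C: "C \<ge> 0" using bd[of 0] norm_ge_zero[of "f 0"] by (simp del: norm_ge_zero)
    have "(exp (- k * a) - exp (- k * b)) / k \<le> exp (- k * a) / k"
      using k by (simp add: divide_right_mono)
    then have "C * ((exp (- k * a) - exp (- k * b)) / k) \<le> C * (exp (- k * a) / k)"
      using C by (rule mult_left_mono)
    then show ?thesis by simp
  qed
  finally show ?thesis using eq by simp
qed

lemma improper:
  fixes f :: "real \<Rightarrow> 'a::banach"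
  assumes cont: "continuous_on {0..} f" and k: "k > 0"
    and bd: "\<And>t. t \<ge> 0 \<Longrightarrow> norm (f t) \<le> C * exp (- k * t)"
  shows "\<exists>L. ((\<lambda>b. integral {0..b} f) \<longlongrightarrow> L) at_top \<and>
             (\<forall>b\<ge>0. norm (L - integral {0..b} f) \<le> C * exp (- k * b) / k)"
proof -
  define g where "g b = C * exp (- k * b) / k" for b
  have gl: "(g \<longlongrightarrow> 0) at_top" unfolding g_def using k by real_asymp
  define s where "s n = integral {0..real n} f" for n :: nat
  have tb: "norm (integral {0..b} f - integral {0..a} f) \<le> g a" if "0 \<le> a" "a \<le> b" for a b
    unfolding g_def using tail_bound[OF cont k bd that] .
  have "Cauchy s"
  proof (rule metric_CauchyI)
    fix e :: real assume e: "e > 0"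
    have e2: "e / 2 > 0" using e by simp
    have "eventually (\<lambda>b. dist (g b) 0 < e / 2) at_top"
      using gl[unfolded tendsto_iff, rule_format, OF e2] .
    then have "eventually (\<lambda>b. g b < e / 2) at_top"
      by (rule eventually_mono) (simp add: dist_real_def)
    then obtain B where B: "\<And>b. b \<ge> B \<Longrightarrow> g b < e / 2" unfolding eventually_at_top_linorder by blast
    define N where "N = nat \<lceil>max B 0\<rceil>"
    have NB: "real N \<ge> B" "real N \<ge> 0" unfolding N_def by linarith+
    show "\<exists>M. \<forall>m\<ge>M. \<forall>n\<ge>M. dist (s m) (s n) < e"
    proof (intro exI[of _ N] allI impI)
      fix m n assume mn: "m \<ge> N" "n \<ge> N"
      have "norm (s m - s N) \<le> g (real N)" unfolding s_def using tb[of "real N" "real m"] NB mn by simp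
      moreover have "norm (s n - s N) \<le> g (real N)" unfolding s_def using tb[of "real N" "real n"] NB mn by simp
      moreover have "g (real N) < e / 2" using B NB by simp
      ultimately show "dist (s m) (s n) < e"
        using norm_triangle_ineq4[of "s m - s N" "s n - s N"] by (simp add: dist_norm)
    qed
  qed
  then obtain L where sL: "s \<longlonglongrightarrow> L" using Cauchy_convergent_iff convergent_def by blast
  have est: "norm (L - integral {0..b} f) \<le> g b" if b: "b \<ge> 0" for b
  proof -
    have "(\<lambda>n. norm (s n - integral {0..b} f)) \<longlonglongrightarrow> norm (L - integral {0..b} f)"
      by (intro tendsto_intros sL)
    moreover have "eventually (\<lambda>n. norm (s n - integral {0..b} f) \<le> g b) sequentially"
    proof -
      obtain N :: nat where "b \<le> real N" using real_arch_simple by blast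
      then have "\<forall>n\<ge>N. norm (s n - integral {0..b} f) \<le> g b"
      proof (intro allI impI)
        fix n assume "n \<ge> N"
        then have "b \<le> real n" using \<open>b \<le> real N\<close> by linarith
        then show "norm (s n - integral {0..b} f) \<le> g b" unfolding s_def using tb b by blast
      qed
      then show ?thesis unfolding eventually_sequentially by blast
    qed
    ultimately show ?thesis by (intro tendsto_upperbound) auto
  qed
  have "((\<lambda>b. integral {0..b} f) \<longlongrightarrow> L) at_top"
    unfolding tendsto_iff
  proof (intro allI impI)
    fix e :: real assume e: "e > 0"
    have "eventually (\<lambda>b. dist (g b) 0 < e) at_top"
      using gl[unfolded tendsto_iff, rule_format, OF e] .
    then have "eventually (\<lambda>b. g b < e) at_top"
      by (rule eventually_mono) (simp add: dist_real_def)
    moreover have "eventually (\<lambda>b. b \<ge> (0::real)) at_top" by (rule eventually_ge_at_top)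
    ultimately show "eventually (\<lambda>b. dist (integral {0..b} f) L < e) at_top"
    proof eventually_elim
      case (elim b)
      then show ?case using est[of b] by (simp add: dist_norm norm_minus_commute)
    qed
  qed
  then show ?thesis using est unfolding g_def by blast
qed

definition lap :: "(real \<Rightarrow> 'a \<Rightarrow> 'a) \<Rightarrow> real \<Rightarrow> 'a::banach \<Rightarrow> 'a" where
  "lap T lam x = Lim at_top (\<lambda>b. integral {0..b} (\<lambda>t. exp (- lam * t) *\<^sub>R T t x))"

lemma lapF_cont:
  assumes T: "C0_semigroup T"
  shows "continuous_on {0..} (\<lambda>t. exp (- lam * t) *\<^sub>R T t x)"
  by (intro continuous_intros sg_cont[OF T])

lemma lapF_int:
  assumes T: "C0_semigroup T" and a: "a \<ge> 0"
  shows "(\<lambda>t. exp (- lam * t) *\<^sub>R T t x) integrable_on {a..b}"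
  using a by (intro integrable_continuous_interval continuous_on_subset[OF lapF_cont[OF T]]) auto

lemma lapF_bound:
  assumes bd: "\<forall>t\<ge>0. \<forall>x. norm (T t x) \<le> M * exp (w * t) * norm x" and t: "t \<ge> 0"
  shows "norm (exp (- lam * t) *\<^sub>R T t x) \<le> (M * norm x) * exp (- (lam - w) * t)"
proof -
  have "norm (exp (- lam * t) *\<^sub>R T t x) = exp (- lam * t) * norm (T t x)" by simp
  also have "\<dots> \<le> exp (- lam * t) * (M * exp (w * t) * norm x)"
    using bd t by (intro mult_left_mono) auto
  also have "\<dots> = (M * norm x) * (exp (- lam * t) * exp (w * t))" by (simp add: algebra_simps)
  also have "exp (- lam * t) * exp (w * t) = exp (- (lam - w) * t)"
    by (simp add: exp_add[symmetric] algebra_simps)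
  finally show ?thesis .
qed

lemma lap_conv:
  assumes T: "C0_semigroup T" and bd: "\<forall>t\<ge>0. \<forall>x. norm (T t x) \<le> M * exp (w * t) * norm x"
    and lam: "lam > w"
  shows "((\<lambda>b. integral {0..b} (\<lambda>t. exp (- lam * t) *\<^sub>R T t x)) \<longlongrightarrow> lap T lam x) at_top"
    and "\<forall>b\<ge>0. norm (lap T lam x - integral {0..b} (\<lambda>t. exp (- lam * t) *\<^sub>R T t x))
            \<le> M * norm x * exp (- (lam - w) * b) / (lam - w)"
proof -
  obtain L where L: "((\<lambda>b. integral {0..b} (\<lambda>t. exp (- lam * t) *\<^sub>R T t x)) \<longlongrightarrow> L) at_top"
    "\<forall>b\<ge>0. norm (L - integral {0..b} (\<lambda>t. exp (- lam * t) *\<^sub>R T t x)) \<le> M * norm x * exp (- (lam - w) * b) / (lam - w)"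
  proof (rule improper[of "\<lambda>t. exp (- lam * t) *\<^sub>R T t x" "lam - w" "M * norm x", THEN exE])
    show "continuous_on {0..} (\<lambda>t. exp (- lam * t) *\<^sub>R T t x)" by (rule lapF_cont[OF T])
    show "lam - w > 0" using lam by simp
    show "norm (exp (- lam * t) *\<^sub>R T t x) \<le> M * norm x * exp (- (lam - w) * t)" if "t \<ge> 0" for t
      by (rule lapF_bound[OF bd that])
  qed blast
  have "lap T lam x = L" unfolding lap_def using L(1) by (intro tendsto_Lim) auto
  then show "((\<lambda>b. integral {0..b} (\<lambda>t. exp (- lam * t) *\<^sub>R T t x)) \<longlongrightarrow> lap T lam x) at_top"
    "\<forall>b\<ge>0. norm (lap T lam x - integral {0..b} (\<lambda>t. exp (- lam * t) *\<^sub>R T t x))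
            \<le> M * norm x * exp (- (lam - w) * b) / (lam - w)" using L by auto
qed

lemma lap_norm:
  assumes T: "C0_semigroup T" and bd: "\<forall>t\<ge>0. \<forall>x. norm (T t x) \<le> M * exp (w * t) * norm x"
    and lam: "lam > w"
  shows "norm (lap T lam x) \<le> M * norm x / (lam - w)"
  using lap_conv(2)[OF T bd lam, of x] by auto

lemma lap_add:
  assumes T: "C0_semigroup T" and bd: "\<forall>t\<ge>0. \<forall>x. norm (T t x) \<le> M * exp (w * t) * norm x"
    and lam: "lam > w"
  shows "lap T lam (x + y) = lap T lam x + lap T lam y"
proof -
  have eq: "integral {0..b} (\<lambda>t. exp (- lam * t) *\<^sub>R T t (x + y)) =
    integral {0..b} (\<lambda>t. exp (- lam * t) *\<^sub>R T t x) + integral {0..b} (\<lambda>t. exp (- lam * t) *\<^sub>R T t y)" for b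
  proof -
    have "integral {0..b} (\<lambda>t. exp (- lam * t) *\<^sub>R T t (x + y)) =
      integral {0..b} (\<lambda>t. exp (- lam * t) *\<^sub>R T t x + exp (- lam * t) *\<^sub>R T t y)"
      by (intro integral_cong) (simp add: linear_add[OF sg_lin[OF T]] scaleR_add_right)
    also have "\<dots> = integral {0..b} (\<lambda>t. exp (- lam * t) *\<^sub>R T t x) + integral {0..b} (\<lambda>t. exp (- lam * t) *\<^sub>R T t y)"
      by (intro integral_add lapF_int[OF T]) auto
    finally show ?thesis .
  qed
  have "((\<lambda>b. integral {0..b} (\<lambda>t. exp (- lam * t) *\<^sub>R T t (x + y))) \<longlongrightarrow> lap T lam x + lap T lam y) at_top"
    unfolding eq by (intro tendsto_add lap_conv(1)[OF T bd lam])
  then show ?thesis by (intro tendsto_unique[OF _ lap_conv(1)[OF T bd lam, of "x + y"]]) auto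
qed

lemma lap_scale:
  assumes T: "C0_semigroup T" and bd: "\<forall>t\<ge>0. \<forall>x. norm (T t x) \<le> M * exp (w * t) * norm x"
    and lam: "lam > w"
  shows "lap T lam (c *\<^sub>R x) = c *\<^sub>R lap T lam x"
proof -
  have eq: "integral {0..b} (\<lambda>t. exp (- lam * t) *\<^sub>R T t (c *\<^sub>R x)) =
    c *\<^sub>R integral {0..b} (\<lambda>t. exp (- lam * t) *\<^sub>R T t x)" for b
  proof -
    have "integral {0..b} (\<lambda>t. exp (- lam * t) *\<^sub>R T t (c *\<^sub>R x)) =
      integral {0..b} (\<lambda>t. c *\<^sub>R (exp (- lam * t) *\<^sub>R T t x))"
      by (intro integral_cong) (simp add: linear_scale[OF sg_lin[OF T]])
    also have "\<dots> = c *\<^sub>R integral {0..b} (\<lambda>t. exp (- lam * t) *\<^sub>R T t x)" by (rule integral_cmul)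
    finally show ?thesis .
  qed
  have "((\<lambda>b. integral {0..b} (\<lambda>t. exp (- lam * t) *\<^sub>R T t (c *\<^sub>R x))) \<longlongrightarrow> c *\<^sub>R lap T lam x) at_top"
    unfolding eq by (intro tendsto_scaleR tendsto_const lap_conv(1)[OF T bd lam])
  then show ?thesis by (intro tendsto_unique[OF _ lap_conv(1)[OF T bd lam, of "c *\<^sub>R x"]]) auto
qed

lemma lap_bl:
  assumes T: "C0_semigroup T" and bd: "\<forall>t\<ge>0. \<forall>x. norm (T t x) \<le> M * exp (w * t) * norm x"
    and lam: "lam > w"
  shows "bounded_linear (lap T lam)"
  by (rule bounded_linear_intro[of _ "M / (lam - w)"])
    (use lap_add[OF T bd lam] lap_scale[OF T bd lam] lap_norm[OF T bd lam] in \<open>auto simp: field_simps\<close>)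

lemma avg_lim:
  fixes f :: "real \<Rightarrow> 'a::banach"
  assumes cont: "continuous_on {0..} f"
  shows "((\<lambda>h. (1 / h) *\<^sub>R integral {0..h} f) \<longlongrightarrow> f 0) (at_right 0)"
  unfolding tendsto_iff eventually_at_right_field
proof (intro allI impI)
  fix e :: real assume e: "e > 0"
  obtain d where d: "d > 0" "\<forall>t\<in>{0..}. dist t 0 < d \<longrightarrow> dist (f t) (f 0) < e / 2"
    using cont[unfolded continuous_on_iff] e by (metis atLeast_iff half_gt_zero order_refl)
  show "\<exists>b>0. \<forall>h>0. h < b \<longrightarrow> dist ((1 / h) *\<^sub>R integral {0..h} f) (f 0) < e"
  proof (intro exI[of _ d] conjI allI impI)
    fix h :: real assume h: "h > 0" "h < d"
    have intf: "f integrable_on {0..h}"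
      by (intro integrable_continuous_interval continuous_on_subset[OF cont]) auto
    have "(1 / h) *\<^sub>R integral {0..h} f - f 0 = (1 / h) *\<^sub>R (integral {0..h} f - integral {0..h} (\<lambda>t. f 0))"
      using h by (simp add: scaleR_diff_right)
    also have "integral {0..h} f - integral {0..h} (\<lambda>t. f 0) = integral {0..h} (\<lambda>t. f t - f 0)"
      by (rule integral_diff[symmetric]) (use intf in auto)
    finally have eq: "(1 / h) *\<^sub>R integral {0..h} f - f 0 = (1 / h) *\<^sub>R integral {0..h} (\<lambda>t. f t - f 0)" .
    have "norm (integral {0..h} (\<lambda>t. f t - f 0)) \<le> integral {0..h} (\<lambda>t. e / 2)"
    proof (rule integral_norm_bound_integral)
      show "(\<lambda>t. f t - f 0) integrable_on {0..h}" using intf by (intro integrable_diff) auto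
      show "(\<lambda>t. e / 2) integrable_on {0..h}" by (intro integrable_continuous_interval continuous_on_const)
      fix t assume t: "t \<in> {0..h}"
      then have "dist (f t) (f 0) < e / 2" using d h by (auto simp: dist_real_def)
      then show "norm (f t - f 0) \<le> e / 2" by (simp add: dist_norm)
    qed
    also have "\<dots> = h * (e / 2)" using h by simp
    finally have nI: "norm (integral {0..h} (\<lambda>t. f t - f 0)) \<le> e / 2 * h" by (simp add: mult.commute)
    have "norm ((1 / h) *\<^sub>R integral {0..h} (\<lambda>t. f t - f 0)) = norm (integral {0..h} (\<lambda>t. f t - f 0)) / h"
      using h by simp
    also have "\<dots> \<le> e / 2" using nI h by (simp add: pos_divide_le_eq mult.commute)
    finally have "norm ((1 / h) *\<^sub>R integral {0..h} (\<lambda>t. f t - f 0)) \<le> e / 2" .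
    then have "norm ((1 / h) *\<^sub>R integral {0..h} f - f 0) \<le> e / 2" using eq by simp
    then have "norm ((1 / h) *\<^sub>R integral {0..h} f - f 0) < e" using e by linarith
    then show "dist ((1 / h) *\<^sub>R integral {0..h} f) (f 0) < e"
      by (simp add: dist_norm)
  qed (use d in auto)
qed

lemma lap_commute:
  assumes T: "C0_semigroup T" and bd: "\<forall>t\<ge>0. \<forall>x. norm (T t x) \<le> M * exp (w * t) * norm x"
    and lam: "lam > w" and h: "h \<ge> 0"
  shows "T h (lap T lam x) = lap T lam (T h x)"
proof -
  have eq: "T h (integral {0..b} (\<lambda>t. exp (- lam * t) *\<^sub>R T t x)) = integral {0..b} (\<lambda>t. exp (- lam * t) *\<^sub>R T t (T h x))" for b
  proof -
    have "T h (integral {0..b} (\<lambda>t. exp (- lam * t) *\<^sub>R T t x)) = integral {0..b} (T h \<circ> (\<lambda>t. exp (- lam * t) *\<^sub>R T t x))"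
      by (rule integral_linear[symmetric], rule lapF_int[OF T order_refl], rule sg_bl[OF T h])
    also have "\<dots> = integral {0..b} (\<lambda>t. exp (- lam * t) *\<^sub>R T t (T h x))"
    proof (rule integral_cong)
      fix t assume "t \<in> {0..b}"
      then have t: "t \<ge> 0" by simp
      have "T h (T t x) = T t (T h x)"
        using sg_shift[OF T h t, of x] sg_shift[OF T t h, of x] by (simp add: add.commute)
      then show "(T h \<circ> (\<lambda>t. exp (- lam * t) *\<^sub>R T t x)) t = exp (- lam * t) *\<^sub>R T t (T h x)"
        using linear_scale[OF sg_lin[OF T h]] by simp
    qed
    finally show ?thesis .
  qed
  have "((\<lambda>b. T h (integral {0..b} (\<lambda>t. exp (- lam * t) *\<^sub>R T t x))) \<longlongrightarrow> T h (lap T lam x)) at_top"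
    by (rule bounded_linear.tendsto[OF sg_bl[OF T h] lap_conv(1)[OF T bd lam]])
  then have "((\<lambda>b. integral {0..b} (\<lambda>t. exp (- lam * t) *\<^sub>R T t (T h x))) \<longlongrightarrow> T h (lap T lam x)) at_top"
    unfolding eq .
  then show ?thesis by (intro tendsto_unique[OF _ _ lap_conv(1)[OF T bd lam, of "T h x"]]) auto
qed

lemma lap_shift:
  assumes T: "C0_semigroup T" and bd: "\<forall>t\<ge>0. \<forall>x. norm (T t x) \<le> M * exp (w * t) * norm x"
    and lam: "lam > w" and h: "h \<ge> 0"
  shows "T h (lap T lam x) = exp (lam * h) *\<^sub>R (lap T lam x - integral {0..h} (\<lambda>t. exp (- lam * t) *\<^sub>R T t x))"
proof -
  define F where "F = (\<lambda>t. exp (- lam * t) *\<^sub>R T t x)"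
  define G where "G = (\<lambda>s. exp (lam * h) *\<^sub>R F s)"
  have eq: "T h (integral {0..b} F) = exp (lam * h) *\<^sub>R (integral {0..b + h} F - integral {0..h} F)"
    if b: "b \<ge> 0" for b
  proof -
    have "T h (integral {0..b} F) = integral {0..b} (T h \<circ> F)"
      unfolding F_def by (rule integral_linear[symmetric], rule lapF_int[OF T order_refl], rule sg_bl[OF T h])
    also have "\<dots> = integral {0..b} (G \<circ> (+) h)"
    proof (rule integral_cong)
      fix t assume "t \<in> {0..b}"
      then have t: "t \<ge> 0" by simp
      have "exp (lam * h) * exp (- lam * (h + t)) = exp (- lam * t)"
        by (simp add: exp_add[symmetric] algebra_simps)
      then show "(T h \<circ> F) t = (G \<circ> (+) h) t"
        unfolding F_def G_def using sg_shift[OF T h t, of x] linear_scale[OF sg_lin[OF T h]]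
        by simp
    qed
    also have "\<dots> = integral {0 + h..b + h} G" by (rule integral_shift_Icc_real)
    also have "\<dots> = exp (lam * h) *\<^sub>R integral {h..b + h} F" unfolding G_def by simp
    also have "integral {h..b + h} F = integral {0..b + h} F - integral {0..h} F"
    proof -
      have "integral {0..h} F + integral {h..b + h} F = integral {0..b + h} F"
        using b h unfolding F_def by (intro Henstock_Kurzweil_Integration.integral_combine lapF_int[OF T order_refl]) auto
      then show ?thesis by (simp add: algebra_simps)
    qed
    finally show ?thesis .
  qed
  have l1: "((\<lambda>b. T h (integral {0..b} F)) \<longlongrightarrow> T h (lap T lam x)) at_top"
    unfolding F_def by (rule bounded_linear.tendsto[OF sg_bl[OF T h] lap_conv(1)[OF T bd lam]])
  have shift: "filterlim (\<lambda>b. b + h) at_top at_top"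
    using filterlim_tendsto_add_at_top[OF tendsto_const filterlim_ident, of h] by (simp add: add.commute)
  have "((\<lambda>b. integral {0..b + h} F) \<longlongrightarrow> lap T lam x) at_top"
    unfolding F_def using filterlim_compose[OF lap_conv(1)[OF T bd lam] shift] by (simp add: o_def)
  then have l2: "((\<lambda>b. exp (lam * h) *\<^sub>R (integral {0..b + h} F - integral {0..h} F)) \<longlongrightarrow>
      exp (lam * h) *\<^sub>R (lap T lam x - integral {0..h} F)) at_top"
    by (intro tendsto_intros)
  have "((\<lambda>b. T h (integral {0..b} F)) \<longlongrightarrow> exp (lam * h) *\<^sub>R (lap T lam x - integral {0..h} F)) at_top"
  proof (rule Lim_transform_eventually[OF l2])
    show "\<forall>\<^sub>F b in at_top. exp (lam * h) *\<^sub>R (integral {0..b + h} F - integral {0..h} F) = T h (integral {0..b} F)"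
      using eventually_ge_at_top[of "0::real"] by (rule eventually_mono) (simp add: eq)
  qed
  then show ?thesis using l1 unfolding F_def by (intro tendsto_unique[of at_top]) auto
qed

lemma lap_deriv:
  assumes T: "C0_semigroup T" and bd: "\<forall>t\<ge>0. \<forall>x. norm (T t x) \<le> M * exp (w * t) * norm x"
    and lam: "lam > w"
  shows "((\<lambda>h. (1 / h) *\<^sub>R (T h (lap T lam x) - lap T lam x)) \<longlongrightarrow> lam *\<^sub>R lap T lam x - x) (at_right 0)"
proof -
  define L where "L = lap T lam x"
  define F where "F = (\<lambda>t. exp (- lam * t) *\<^sub>R T t x)"
  have eq: "(1 / h) *\<^sub>R (T h L - L) = ((exp (lam * h) - 1) / h) *\<^sub>R L - exp (lam * h) *\<^sub>R ((1 / h) *\<^sub>R integral {0..h} F)"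
    if h: "h > 0" for h
  proof -
    have TL: "T h L = exp (lam * h) *\<^sub>R (L - integral {0..h} F)"
      unfolding L_def F_def using lap_shift[OF T bd lam, of h x] h by simp
    show ?thesis unfolding TL
      by (simp add: scaleR_diff_right scaleR_diff_left diff_divide_distrib)
  qed
  have F0: "F 0 = x" unfolding F_def using sg_zero[OF T] by simp
  have l1: "((\<lambda>h. (exp (lam * h) - 1) / h) \<longlongrightarrow> lam) (at_right 0)" by real_asymp
  have l2: "((\<lambda>h. exp (lam * h)) \<longlongrightarrow> 1) (at_right 0)" by real_asymp
  have l3: "((\<lambda>h. (1 / h) *\<^sub>R integral {0..h} F) \<longlongrightarrow> x) (at_right 0)"
    using avg_lim[OF lapF_cont[OF T, of lam x]] F0 unfolding F_def by simp
  have lim: "((\<lambda>h. ((exp (lam * h) - 1) / h) *\<^sub>R L - exp (lam * h) *\<^sub>R ((1 / h) *\<^sub>R integral {0..h} F))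
      \<longlongrightarrow> lam *\<^sub>R L - x) (at_right 0)"
    using tendsto_diff[OF tendsto_scaleR[OF l1 tendsto_const] tendsto_scaleR[OF l2 l3]] by simp
  have "((\<lambda>h. (1 / h) *\<^sub>R (T h L - L)) \<longlongrightarrow> lam *\<^sub>R L - x) (at_right 0)"
  proof (rule Lim_transform_eventually[OF lim])
    show "\<forall>\<^sub>F h in at_right 0. ((exp (lam * h) - 1) / h) *\<^sub>R L - exp (lam * h) *\<^sub>R ((1 / h) *\<^sub>R integral {0..h} F) = 
          (1 / h) *\<^sub>R (T h L - L)"
      using eventually_at_right_less[of "0::real"] by (rule eventually_mono) (simp add: eq)
  qed
  then show ?thesis unfolding L_def .
qed

lemma lap_deriv2:
  assumes T: "C0_semigroup T" and bd: "\<forall>t\<ge>0. \<forall>x. norm (T t x) \<le> M * exp (w * t) * norm x"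
    and lam: "lam > w" and y: "((\<lambda>h. (1 / h) *\<^sub>R (T h x - x)) \<longlongrightarrow> y) (at_right 0)"
  shows "((\<lambda>h. (1 / h) *\<^sub>R (T h (lap T lam x) - lap T lam x)) \<longlongrightarrow> lap T lam y) (at_right 0)"
proof -
  have bl: "bounded_linear (lap T lam)" by (rule lap_bl[OF T bd lam])
  have lim: "((\<lambda>h. lap T lam ((1 / h) *\<^sub>R (T h x - x))) \<longlongrightarrow> lap T lam y) (at_right 0)"
    by (rule bounded_linear.tendsto[OF bl y])
  show ?thesis
  proof (rule Lim_transform_eventually[OF lim])
    show "\<forall>\<^sub>F h in at_right 0. lap T lam ((1 / h) *\<^sub>R (T h x - x)) = (1 / h) *\<^sub>R (T h (lap T lam x) - lap T lam x)"
      using eventually_at_right_less[of "0::real"]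
    proof (rule eventually_mono)
      fix h :: real assume h: "0 < h"
      have "lap T lam ((1 / h) *\<^sub>R (T h x - x)) = (1 / h) *\<^sub>R (lap T lam (T h x) - lap T lam x)"
        using bounded_linear.linear[OF bl] by (simp add: linear_scale linear_diff)
      also have "lap T lam (T h x) = T h (lap T lam x)" using lap_commute[OF T bd lam, of h x] h by simp
      finally show "lap T lam ((1 / h) *\<^sub>R (T h x - x)) = (1 / h) *\<^sub>R (T h (lap T lam x) - lap T lam x)" .
    qed
  qed
qed

lemma lap_approx:
  assumes T: "C0_semigroup T" and bd: "\<forall>t\<ge>0. \<forall>x. norm (T t x) \<le> M * exp (w * t) * norm x"
    and M: "M \<ge> 1" and w: "w > 0"
  shows "((\<lambda>lam. lam *\<^sub>R lap T lam x) \<longlongrightarrow> x) at_top"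
  unfolding tendsto_iff
proof (intro allI impI)
  fix e :: real assume e: "e > 0"
  obtain d where d: "d > 0" "\<forall>h. 0 \<le> h \<and> h < d \<longrightarrow> norm (T h x - x) < e / 2"
    using sg_right[OF T, of "e / 2" x] e by auto
  define K0 where "K0 = (M + 1) * norm x"
  have K0: "K0 \<ge> 0" unfolding K0_def using M by simp
  have main: "norm (lam *\<^sub>R lap T lam x - x) \<le> e / 2 + 2 * lam * K0 * exp (- (lam - w) * d / 2) / (lam - w)"
    if lam: "lam > w" for lam
  proof -
    have lam0: "lam > 0" using lam w by simp
    define F where "F = (\<lambda>t. exp (- lam * t) *\<^sub>R T t x)"
    define G where "G = (\<lambda>t. (lam * exp (- lam * t)) *\<^sub>R (T t x - x))"
    define k' where "k' = (lam - w) / 2"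
    define K' where "K' = lam * K0 * exp (- (lam - w) * d / 2)"
    have k': "k' > 0" unfolding k'_def using lam by simp
    have K': "K' \<ge> 0" unfolding K'_def using lam0 K0 by simp
    define g where "g = (\<lambda>t. (e / 2 * lam) * exp (- lam * t) + K' * exp (- k' * t))"
    have Gint: "(G has_integral (lam *\<^sub>R integral {0..b} F - (lam * ((exp (- lam * 0) - exp (- lam * b)) / lam)) *\<^sub>R x)) {0..b}"
      if b: "b \<ge> 0" for b
    proof -
      have i1: "((\<lambda>t. lam *\<^sub>R F t) has_integral lam *\<^sub>R integral {0..b} F) {0..b}"
        unfolding F_def by (intro has_integral_cmul integrable_integral lapF_int[OF T order_refl])
      have i2: "((\<lambda>t. (lam * exp (- lam * t)) *\<^sub>R x) has_integral (lam * ((exp (- lam * 0) - exp (- lam * b)) / lam)) *\<^sub>R x) {0..b}"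
        by (intro has_integral_scaleR_left cexp_has_integral lam0 b)
      have "G = (\<lambda>t. lam *\<^sub>R F t - (lam * exp (- lam * t)) *\<^sub>R x)"
        unfolding G_def F_def by (rule ext) (simp add: scaleR_diff_right)
      then show ?thesis using has_integral_diff[OF i1 i2] by simp
    qed
    have Jeq: "integral {0..b} G = lam *\<^sub>R integral {0..b} F - (1 - exp (- lam * b)) *\<^sub>R x" if b: "b \<ge> 0" for b
      using integral_unique[OF Gint[OF b]] lam0 by simp
    have lim_e: "((\<lambda>b. exp (- lam * b)) \<longlongrightarrow> 0) at_top" using lam0 by real_asymp
    have Jlim: "((\<lambda>b. lam *\<^sub>R integral {0..b} F - (1 - exp (- lam * b)) *\<^sub>R x) \<longlongrightarrow> lam *\<^sub>R lap T lam x - x) at_top"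
      using tendsto_diff[OF tendsto_scaleR[OF tendsto_const[of lam] lap_conv(1)[OF T bd lam, of x]]
          tendsto_scaleR[OF tendsto_diff[OF tendsto_const[of 1] lim_e] tendsto_const[of x]]]
      unfolding F_def by simp
    have Jbd: "norm (lam *\<^sub>R integral {0..b} F - (1 - exp (- lam * b)) *\<^sub>R x) \<le> e / 2 + K' / k'"
      if b: "b \<ge> 0" for b
    proof -
      have gint: "(g has_integral ((e / 2 * lam) * ((exp (- lam * 0) - exp (- lam * b)) / lam)
                    + K' * ((exp (- k' * 0) - exp (- k' * b)) / k'))) {0..b}"
        unfolding g_def by (intro has_integral_add cexp_has_integral lam0 k' b)
      have pt: "norm (G t) \<le> g t" if t: "t \<in> {0..b}" for t
      proof -
        have t0: "t \<ge> 0" using t by simp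
        have nG: "norm (G t) = lam * exp (- lam * t) * norm (T t x - x)"
          unfolding G_def using lam0 by simp
        show ?thesis
        proof (cases "t < d")
          case True
          have "norm (T t x - x) \<le> e / 2" using d True t0 by auto
          then have "norm (G t) \<le> lam * exp (- lam * t) * (e / 2)"
            unfolding nG using lam0 by (intro mult_left_mono) auto
          moreover have "K' * exp (- k' * t) \<ge> 0" using K' by simp
          ultimately show ?thesis unfolding g_def by (simp add: algebra_simps)
        next
          case False
          have ew: "exp (w * t) \<ge> 1" using w t0 by simp
          have "norm (T t x - x) \<le> norm (T t x) + norm x" by (rule norm_triangle_ineq4)
          also have "\<dots> \<le> M * exp (w * t) * norm x + exp (w * t) * norm x"
          proof (rule add_mono)
            show "norm (T t x) \<le> M * exp (w * t) * norm x" using bd t0 by blast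
            show "norm x \<le> exp (w * t) * norm x" using mult_right_mono[OF ew, of "norm x"] by simp
          qed
          also have "\<dots> = K0 * exp (w * t)" unfolding K0_def by (simp add: algebra_simps)
          finally have n1: "norm (T t x - x) \<le> K0 * exp (w * t)" .
          have "norm (G t) \<le> lam * exp (- lam * t) * (K0 * exp (w * t))"
            unfolding nG using n1 lam0 by (intro mult_left_mono) auto
          also have "\<dots> = lam * K0 * exp (- (lam - w) * t)"
            by (simp add: exp_add[symmetric] algebra_simps)
          also have "exp (- (lam - w) * t) \<le> exp (- (lam - w) * d / 2) * exp (- k' * t)"
          proof -
            have "- (lam - w) * t \<le> - (lam - w) * d / 2 + - k' * t"
            proof -
              have h: "0 \<le> (lam - w) * (t - d)" using False lam by (intro mult_nonneg_nonneg) auto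
              have "- (lam - w) * d / 2 + - k' * t - (- (lam - w) * t) = (lam - w) * (t - d) / 2"
                unfolding k'_def by (simp add: algebra_simps diff_divide_distrib)
              then show ?thesis using h by linarith
            qed
            then show ?thesis by (simp add: exp_add[symmetric])
          qed
          then have "lam * K0 * exp (- (lam - w) * t) \<le> lam * K0 * (exp (- (lam - w) * d / 2) * exp (- k' * t))"
            using lam0 K0 by (intro mult_left_mono) auto
          also have "\<dots> = K' * exp (- k' * t)" unfolding K'_def by simp
          finally have "norm (G t) \<le> K' * exp (- k' * t)" .
          moreover have "(e / 2 * lam) * exp (- lam * t) \<ge> 0" using e lam0 by simp
          ultimately show ?thesis unfolding g_def by simp
        qed
      qed
      have "norm (integral {0..b} G) \<le> integral {0..b} g"
        by (intro integral_norm_bound_integral pt) (use Gint[OF b] gint in \<open>auto intro: has_integral_integrable\<close>)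
      also have "integral {0..b} g = (e / 2) * (1 - exp (- lam * b)) + K' * ((1 - exp (- k' * b)) / k')"
        using integral_unique[OF gint] lam0 by simp
      also have "\<dots> \<le> e / 2 + K' / k'"
      proof -
        have "(e / 2) * (1 - exp (- lam * b)) \<le> e / 2" using e by simp
        moreover have "K' * ((1 - exp (- k' * b)) / k') \<le> K' / k'"
        proof -
          have "K' * (1 - exp (- k' * b)) \<le> K' * 1" using K' by (intro mult_left_mono) auto
          then have "K' * (1 - exp (- k' * b)) / k' \<le> K' / k'" using k' by (simp add: divide_right_mono)
          then show ?thesis by simp
        qed
        ultimately show ?thesis by linarith
      qed
      finally show ?thesis using Jeq[OF b] by simp
    qed
    have "norm (lam *\<^sub>R lap T lam x - x) \<le> e / 2 + K' / k'"
    proof (rule tendsto_upperbound[OF tendsto_norm[OF Jlim]])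
      show "\<forall>\<^sub>F b in at_top. norm (lam *\<^sub>R integral {0..b} F - (1 - exp (- lam * b)) *\<^sub>R x) \<le> e / 2 + K' / k'"
        using eventually_ge_at_top[of "0::real"] by (rule eventually_mono) (rule Jbd)
    qed simp
    also have "K' / k' = 2 * lam * K0 * exp (- (lam - w) * d / 2) / (lam - w)"
      unfolding K'_def k'_def by simp
    finally show ?thesis .
  qed
  have "((\<lambda>lam. 2 * lam * K0 * exp (- (lam - w) * d / 2) / (lam - w)) \<longlongrightarrow> 0) at_top"
    using d(1) by real_asymp
  note lim0 = this
  have e2: "e / 2 > 0" using e by simp
  have ev1: "\<forall>\<^sub>F lam in at_top. 2 * lam * K0 * exp (- (lam - w) * d / 2) / (lam - w) < e / 2"
  proof (rule eventually_mono[OF lim0[unfolded tendsto_iff, rule_format, OF e2]])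
    fix lam :: real
    assume "dist (2 * lam * K0 * exp (- (lam - w) * d / 2) / (lam - w)) 0 < e / 2"
    then show "2 * lam * K0 * exp (- (lam - w) * d / 2) / (lam - w) < e / 2"
      unfolding dist_real_def by linarith
  qed
  show "\<forall>\<^sub>F lam in at_top. dist (lam *\<^sub>R lap T lam x) x < e"
    using ev1 eventually_gt_at_top[of w]
  proof eventually_elim
    case (elim lam)
    then show ?case using main[of lam] by (simp add: dist_norm)
  qed
qed

lemma gen_resolvent:
  assumes gen: "generates D' B"
  shows "\<exists>w Rs. (\<forall>lam>w. bounded_linear (Rs lam) \<and> (\<forall>y. Rs lam y \<in> D' \<and> lam *\<^sub>R Rs lam y - B (Rs lam y) = y)
            \<and> (\<forall>x\<in>D'. Rs lam (lam *\<^sub>R x - B x) = x))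
          \<and> (\<forall>x. ((\<lambda>lam. lam *\<^sub>R Rs lam x) \<longlongrightarrow> x) at_top)"
proof -
  obtain T where T: "C0_semigroup T"
    and D': "D' = {x. \<exists>y. ((\<lambda>h. (1 / h) *\<^sub>R (T h x - x)) \<longlongrightarrow> y) (at_right 0)}"
    and Bl: "\<forall>x\<in>D'. ((\<lambda>h. (1 / h) *\<^sub>R (T h x - x)) \<longlongrightarrow> B x) (at_right 0)"
    using gen unfolding generates_def by blast
  obtain M w where M: "M \<ge> 1" and w: "w > 0" and bd: "\<forall>t\<ge>0. \<forall>x. norm (T t x) \<le> M * exp (w * t) * norm x"
    using sg_exp_bound[OF T] by blast
  have nb: "at_right (0::real) \<noteq> bot" by simp
  have res: "bounded_linear (lap T lam) \<and> (\<forall>y. lap T lam y \<in> D' \<and> lam *\<^sub>R lap T lam y - B (lap T lam y) = y)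
            \<and> (\<forall>x\<in>D'. lap T lam (lam *\<^sub>R x - B x) = x)" if lam: "lam > w" for lam
  proof (intro conjI allI ballI)
    show bl: "bounded_linear (lap T lam)" by (rule lap_bl[OF T bd lam])
    fix y
    have l: "((\<lambda>h. (1 / h) *\<^sub>R (T h (lap T lam y) - lap T lam y)) \<longlongrightarrow> lam *\<^sub>R lap T lam y - y) (at_right 0)"
      by (rule lap_deriv[OF T bd lam])
    then show yD: "lap T lam y \<in> D'" unfolding D' by blast
    have "B (lap T lam y) = lam *\<^sub>R lap T lam y - y"
      using tendsto_unique[OF nb Bl[rule_format, OF yD] l] .
    then show "lam *\<^sub>R lap T lam y - B (lap T lam y) = y" by simp
  next
    fix x assume xD: "x \<in> D'"
    have l1: "((\<lambda>h. (1 / h) *\<^sub>R (T h (lap T lam x) - lap T lam x)) \<longlongrightarrow> lap T lam (B x)) (at_right 0)"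
      by (rule lap_deriv2[OF T bd lam Bl[rule_format, OF xD]])
    have l2: "((\<lambda>h. (1 / h) *\<^sub>R (T h (lap T lam x) - lap T lam x)) \<longlongrightarrow> lam *\<^sub>R lap T lam x - x) (at_right 0)"
      by (rule lap_deriv[OF T bd lam])
    have eq: "lap T lam (B x) = lam *\<^sub>R lap T lam x - x" using tendsto_unique[OF nb l1 l2] .
    have "lap T lam (lam *\<^sub>R x - B x) = lam *\<^sub>R lap T lam x - lap T lam (B x)"
      using bounded_linear.linear[OF lap_bl[OF T bd lam]] by (simp add: linear_diff linear_scale)
    then show "lap T lam (lam *\<^sub>R x - B x) = x" using eq by simp
  qed
  show ?thesis
    by (rule exI[of _ w], rule exI[of _ "lap T"]) (use res lap_approx[OF T bd M w] in blast)
qed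

lemma lin_on_diff:
  fixes f :: "'a::real_vector \<Rightarrow> 'b::real_vector"
  assumes sD: "subspace D" and f: "\<forall>x\<in>D. \<forall>y\<in>D. \<forall>c. f (x + y) = f x + f y \<and> f (c *\<^sub>R x) = c *\<^sub>R f x"
    and x: "x \<in> D" and y: "y \<in> D"
  shows "f (x - y) = f x - f y"
proof -
  have y': "(-1) *\<^sub>R y \<in> D" using sD y by (rule subspace_scale)
  have "f (x + (-1) *\<^sub>R y) = f x + f ((-1) *\<^sub>R y)" using f x y' by blast
  also have "f ((-1) *\<^sub>R y) = (-1) *\<^sub>R f y" using f y by blast
  finally have "f (x + (-1) *\<^sub>R y) = f x + (-1) *\<^sub>R f y" .
  moreover have "x + (-1) *\<^sub>R y = x - y" by simp
  moreover have "f x + (-1) *\<^sub>R f y = f x - f y" by simp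
  ultimately show ?thesis by simp
qed

lemma lin_on_zero:
  fixes f :: "'a::real_vector \<Rightarrow> 'b::real_vector"
  assumes sD: "subspace D" and f: "\<forall>x\<in>D. \<forall>y\<in>D. \<forall>c. f (x + y) = f x + f y \<and> f (c *\<^sub>R x) = c *\<^sub>R f x"
  shows "f 0 = 0"
proof -
  have "0 \<in> D" using sD by (rule subspace_0)
  then have "f (0 *\<^sub>R 0) = 0 *\<^sub>R f 0" using f by blast
  then show ?thesis by (simp only: scaleR_zero_left)
qed

lemma fd_not_surj:
  fixes V :: "'b::real_normed_vector \<Rightarrow> 'b"
  assumes S: "finite (S::'b set)" "span S = UNIV" and V: "bounded_linear V"
    and ninv: "\<not> (\<exists>W. bounded_linear W \<and> V \<circ> W = id \<and> W \<circ> V = id)"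
  shows "\<not> surj V"
proof
  assume sV: "surj V"
  have lV: "linear V" using V by (rule bounded_linear.linear)
  have iV: "inj V" by (rule fd_surj_inj[OF S lV sV])
  obtain g where g: "linear g" "g \<circ> V = id" using linear_injective_left_inverse[OF lV iV] by blast
  have "V \<circ> g = id"
  proof
    fix y
    obtain z where z: "y = V z" using sV by (metis surjD)
    have "g (V z) = z" using g(2) by (metis comp_apply id_apply)
    then show "(V \<circ> g) y = id y" using z by simp
  qed
  moreover have "bounded_linear g" by (rule fd_bounded_linear[OF S g(1)])
  ultimately show False using ninv g(2) by blast
qed

theorem theoremA6:
  fixes D :: "'a::banach set" and Am :: "'a \<Rightarrow> 'a"
    and L \<Phi> \<Phi>0 :: "'a \<Rightarrow> 'b::banach" and V :: "'b \<Rightarrow> 'b"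
  assumes Am: "closed_dd_operator D Am"
    and L: "graph_bounded D Am L" "L ` D = UNIV"
    and Phi: "graph_bounded D Am \<Phi>" "\<Phi> ` D = UNIV"
    and A_gen: "generates {x \<in> D. L x = 0} Am"
    and G_gen: "generates {x \<in> D. \<Phi> x = 0} Am"
    and Phi0: "graph_bounded D Am \<Phi>0"
    and V: "bounded_linear V" "\<not> (\<exists>W. bounded_linear W \<and> V \<circ> W = id \<and> W \<circ> V = id)"
    and decomp: "\<forall>x\<in>D. \<Phi> x = \<Phi>0 x + V (L x)"
    and fin: "\<exists>S. finite S \<and> span S = (UNIV :: 'b set)"
  shows "filterlim (\<lambda>lam. norm_L_lambda D Am L lam * onorm (\<Phi>0 \<circ> dirichlet_op D Am L lam))
           at_top at_top"
proof -
  obtain S :: "'b set" where S: "finite S" "span S = UNIV" using fin by blast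
  have sD: "subspace D" and AmL: "\<forall>x\<in>D. \<forall>y\<in>D. \<forall>c. Am (x + y) = Am x + Am y \<and> Am (c *\<^sub>R x) = c *\<^sub>R Am x"
    using Am unfolding closed_dd_operator_def by blast+
  obtain CL where LL: "\<forall>x\<in>D. \<forall>y\<in>D. \<forall>c. L (x + y) = L x + L y \<and> L (c *\<^sub>R x) = c *\<^sub>R L x"
    and CL: "\<forall>x\<in>D. norm (L x) \<le> CL * (norm x + norm (Am x))"
    using L(1) unfolding graph_bounded_def by blast
  have PhiL: "\<forall>x\<in>D. \<forall>y\<in>D. \<forall>c. \<Phi> (x + y) = \<Phi> x + \<Phi> y \<and> \<Phi> (c *\<^sub>R x) = c *\<^sub>R \<Phi> x"
    using Phi(1) unfolding graph_bounded_def by blast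
  have Phi0L: "\<forall>x\<in>D. \<forall>y\<in>D. \<forall>c. \<Phi>0 (x + y) = \<Phi>0 x + \<Phi>0 y \<and> \<Phi>0 (c *\<^sub>R x) = c *\<^sub>R \<Phi>0 x"
    using Phi0 unfolding graph_bounded_def by blast
  obtain wA RA where RA: "\<forall>lam>wA. bounded_linear (RA lam)
      \<and> (\<forall>y. RA lam y \<in> {x \<in> D. L x = 0} \<and> lam *\<^sub>R RA lam y - Am (RA lam y) = y)
      \<and> (\<forall>x\<in>{x \<in> D. L x = 0}. RA lam (lam *\<^sub>R x - Am x) = x)"
    using gen_resolvent[OF A_gen] by blast
  obtain wG RG where RG: "\<forall>lam>wG. bounded_linear (RG lam)
      \<and> (\<forall>y. RG lam y \<in> {x \<in> D. \<Phi> x = 0} \<and> lam *\<^sub>R RG lam y - Am (RG lam y) = y)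
      \<and> (\<forall>x\<in>{x \<in> D. \<Phi> x = 0}. RG lam (lam *\<^sub>R x - Am x) = x)"
    and RGa: "\<forall>x. ((\<lambda>lam. lam *\<^sub>R RG lam x) \<longlongrightarrow> x) at_top"
    using gen_resolvent[OF G_gen] by blast

  have dex: "\<exists>x. x \<in> D \<and> Am x = lam *\<^sub>R x \<and> L x = y" if lam: "lam > wA" for lam y
  proof -
    obtain w where w: "w \<in> D" "L w = y" using L(2) by (metis UNIV_I image_iff)
    define r where "r = RA lam (lam *\<^sub>R w - Am w)"
    have r: "r \<in> D" "L r = 0" "lam *\<^sub>R r - Am r = lam *\<^sub>R w - Am w"
      using RA lam unfolding r_def by auto
    have "w - r \<in> D" using sD w r by (intro subspace_diff)
    moreover have "Am (w - r) = lam *\<^sub>R (w - r)"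
    proof -
      have "Am (w - r) = Am w - Am r" by (rule lin_on_diff[OF sD AmL w(1) r(1)])
      also have "Am r = lam *\<^sub>R r - (lam *\<^sub>R w - Am w)" using r(3) by (simp add: algebra_simps)
      finally show ?thesis by (simp add: algebra_simps)
    qed
    moreover have "L (w - r) = y" using lin_on_diff[OF sD LL w(1) r(1)] w r by simp
    ultimately show ?thesis by blast
  qed
  have dun: "x1 = x2" if lam: "lam > wA" and x1: "x1 \<in> D" "Am x1 = lam *\<^sub>R x1"
    and x2: "x2 \<in> D" "Am x2 = lam *\<^sub>R x2" and eq: "L x1 = L x2" for lam x1 x2
  proof -
    define d where "d = x1 - x2"
    have dD: "d \<in> D" unfolding d_def using sD x1 x2 by (intro subspace_diff)
    have Ad: "Am d = lam *\<^sub>R d" unfolding d_def using lin_on_diff[OF sD AmL x1(1) x2(1)] x1 x2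
      by (simp add: scaleR_diff_right)
    have Ld: "L d = 0" unfolding d_def using lin_on_diff[OF sD LL x1(1) x2(1)] eq by simp
    have "RA lam (lam *\<^sub>R d - Am d) = d" using RA lam dD Ld by blast
    moreover have "RA lam (lam *\<^sub>R d - Am d) = 0"
      using Ad bounded_linear.linear[of "RA lam"] RA lam by (simp add: linear_0)
    ultimately show ?thesis unfolding d_def by simp
  qed
  have dprop: "dirichlet_op D Am L lam y \<in> D \<and> Am (dirichlet_op D Am L lam y) = lam *\<^sub>R dirichlet_op D Am L lam y
      \<and> L (dirichlet_op D Am L lam y) = y" if lam: "lam > wA" for lam y
  proof -
    have "\<exists>!x. x \<in> D \<and> Am x = lam *\<^sub>R x \<and> L x = y"
      using dex[OF lam, of y] dun[OF lam] by metis
    then show ?thesis unfolding dirichlet_op_def by (rule theI')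
  qed
  have dL: "dirichlet_op D Am L lam (L x) = x" if lam: "lam > wA" and x: "x \<in> D" "Am x = lam *\<^sub>R x" for lam x
    using dun[OF lam _ _ x] dprop[OF lam, of "L x"] by auto
  have dlin: "linear (dirichlet_op D Am L lam)" if lam: "lam > wA" for lam
  proof (rule linearI)
    fix y1 y2
    let ?d = "dirichlet_op D Am L lam"
    have p1: "?d y1 \<in> D" "Am (?d y1) = lam *\<^sub>R ?d y1" "L (?d y1) = y1" using dprop[OF lam] by auto
    have p2: "?d y2 \<in> D" "Am (?d y2) = lam *\<^sub>R ?d y2" "L (?d y2) = y2" using dprop[OF lam] by auto
    have s: "?d y1 + ?d y2 \<in> D" using sD p1 p2 by (intro subspace_add)
    have "Am (?d y1 + ?d y2) = lam *\<^sub>R (?d y1 + ?d y2)" using AmL p1 p2 by (simp add: scaleR_add_right)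
    moreover have "L (?d y1 + ?d y2) = y1 + y2" using LL p1 p2 by simp
    ultimately show "?d (y1 + y2) = ?d y1 + ?d y2"
      using dun[OF lam _ _ s] dprop[OF lam, of "y1 + y2"] by metis
  next
    fix c y
    let ?d = "dirichlet_op D Am L lam"
    have p1: "?d y \<in> D" "Am (?d y) = lam *\<^sub>R ?d y" "L (?d y) = y" using dprop[OF lam] by auto
    have s: "c *\<^sub>R ?d y \<in> D" using sD p1 by (intro subspace_scale)
    have "Am (c *\<^sub>R ?d y) = lam *\<^sub>R (c *\<^sub>R ?d y)" using AmL p1 by simp
    moreover have "L (c *\<^sub>R ?d y) = c *\<^sub>R y" using LL p1 by simp
    ultimately show "?d (c *\<^sub>R y) = c *\<^sub>R ?d y"
      using dun[OF lam _ _ s] dprop[OF lam, of "c *\<^sub>R y"] by metis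
  qed
  have Pdbl: "bounded_linear (\<Phi>0 \<circ> dirichlet_op D Am L lam)" if lam: "lam > wA" for lam
  proof (rule fd_bounded_linear[OF S], rule linearI)
    fix y1 y2
    have "dirichlet_op D Am L lam (y1 + y2) = dirichlet_op D Am L lam y1 + dirichlet_op D Am L lam y2"
      using dlin[OF lam] by (simp add: linear_add)
    then show "(\<Phi>0 \<circ> dirichlet_op D Am L lam) (y1 + y2) = (\<Phi>0 \<circ> dirichlet_op D Am L lam) y1 + (\<Phi>0 \<circ> dirichlet_op D Am L lam) y2"
      using Phi0L dprop[OF lam, of y1] dprop[OF lam, of y2] by simp
  next
    fix c y
    have "dirichlet_op D Am L lam (c *\<^sub>R y) = c *\<^sub>R dirichlet_op D Am L lam y"
      using dlin[OF lam] by (simp add: linear_scale)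
    moreover have "\<Phi>0 (c *\<^sub>R dirichlet_op D Am L lam y) = c *\<^sub>R \<Phi>0 (dirichlet_op D Am L lam y)"
      using Phi0L dprop[OF lam, of y] by blast
    ultimately show "(\<Phi>0 \<circ> dirichlet_op D Am L lam) (c *\<^sub>R y) = c *\<^sub>R (\<Phi>0 \<circ> dirichlet_op D Am L lam) y"
      by simp
  qed

  have Lnorm: "norm (L u) \<le> norm_L_lambda D Am L lam * norm u" if u: "u \<in> D" "Am u = lam *\<^sub>R u" for lam u
  proof (cases "u = 0")
    case True
    then show ?thesis using lin_on_zero[OF sD LL] by simp
  next
    case False
    let ?X = "(\<lambda>x. norm (L x) / norm x) ` {x \<in> D. Am x = lam *\<^sub>R x}"
    have bdd: "bdd_above ?X"
    proof (rule bdd_aboveI2)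
      fix x assume x: "x \<in> {x \<in> D. Am x = lam *\<^sub>R x}"
      have "norm (L x) \<le> CL * (norm x + norm (Am x))" using CL x by blast
      also have "\<dots> \<le> \<bar>CL\<bar> * (norm x + norm (Am x))" by (intro mult_right_mono) auto
      also have "norm (Am x) = \<bar>lam\<bar> * norm x" using x by simp
      finally have "norm (L x) \<le> (\<bar>CL\<bar> * (1 + \<bar>lam\<bar>)) * norm x" by (simp add: algebra_simps)
      then show "norm (L x) / norm x \<le> \<bar>CL\<bar> * (1 + \<bar>lam\<bar>)"
        by (cases "x = 0") (auto simp: divide_le_eq)
    qed
    have "norm (L u) / norm u \<le> Sup ?X" using u by (intro cSup_upper bdd) auto
    then have "norm (L u) / norm u \<le> norm_L_lambda D Am L lam" unfolding norm_L_lambda_def .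
    then show ?thesis using False by (simp add: divide_le_eq)
  qed

  have nsV: "\<not> surj V" by (rule fd_not_surj[OF S V])
  then obtain z0 where z0: "z0 \<notin> range V" by blast
  have clV: "closed (range V)" by (rule fd_closed_range[OF S bounded_linear.linear[OF V(1)]])
  define dl where "dl = infdist z0 (range V)"
  have dl: "dl > 0"
  proof -
    have "dl \<noteq> 0" using in_closed_iff_infdist_zero[OF clV, of z0] z0 unfolding dl_def by simp
    moreover have "dl \<ge> 0" unfolding dl_def by (rule infdist_nonneg)
    ultimately show ?thesis by simp
  qed
  obtain w0 where w0: "w0 \<in> D" "\<Phi> w0 = z0" using Phi(2) by (metis UNIV_I image_iff)
  define u where "u lam = w0 - RG lam (lam *\<^sub>R w0 - Am w0)" for lam
  have uprop: "u lam \<in> D \<and> Am (u lam) = lam *\<^sub>R u lam \<and> \<Phi> (u lam) = z0" if lam: "lam > wG" for lam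
  proof -
    define r where "r = RG lam (lam *\<^sub>R w0 - Am w0)"
    have r: "r \<in> D" "\<Phi> r = 0" "lam *\<^sub>R r - Am r = lam *\<^sub>R w0 - Am w0"
      using RG lam unfolding r_def by auto
    have "w0 - r \<in> D" using sD w0 r by (intro subspace_diff)
    moreover have "Am (w0 - r) = lam *\<^sub>R (w0 - r)"
    proof -
      have "Am (w0 - r) = Am w0 - Am r" by (rule lin_on_diff[OF sD AmL w0(1) r(1)])
      also have "Am r = lam *\<^sub>R r - (lam *\<^sub>R w0 - Am w0)" using r(3) by (simp add: algebra_simps)
      finally show ?thesis by (simp add: algebra_simps)
    qed
    moreover have "\<Phi> (w0 - r) = z0" using lin_on_diff[OF sD PhiL w0(1) r(1)] w0 r by simp
    ultimately show ?thesis unfolding u_def r_def by blast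
  qed

  have key: "dl \<le> (norm_L_lambda D Am L lam * onorm (\<Phi>0 \<circ> dirichlet_op D Am L lam)) * norm (u lam)"
    if lam: "lam > wA" "lam > wG" for lam
  proof -
    have up: "u lam \<in> D" "Am (u lam) = lam *\<^sub>R u lam" "\<Phi> (u lam) = z0" using uprop[OF lam(2)] by auto
    have "dl \<le> dist z0 (V (L (u lam)))" unfolding dl_def by (rule infdist_le) simp
    also have "dist z0 (V (L (u lam))) = norm (\<Phi>0 (u lam))"
    proof -
      have "z0 = \<Phi>0 (u lam) + V (L (u lam))" using decomp up by metis
      then show ?thesis by (simp add: dist_norm)
    qed
    also have "\<Phi>0 (u lam) = (\<Phi>0 \<circ> dirichlet_op D Am L lam) (L (u lam))"
      using dL[OF lam(1) up(1,2)] by simp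
    also have "norm \<dots> \<le> onorm (\<Phi>0 \<circ> dirichlet_op D Am L lam) * norm (L (u lam))"
      by (rule onorm[OF Pdbl[OF lam(1)]])
    also have "\<dots> \<le> onorm (\<Phi>0 \<circ> dirichlet_op D Am L lam) * (norm_L_lambda D Am L lam * norm (u lam))"
      by (intro mult_left_mono Lnorm up onorm_pos_le Pdbl lam)
    finally show ?thesis by (simp add: algebra_simps)
  qed

  have ulim: "(u \<longlongrightarrow> 0) at_top"
  proof -
    have l1: "((\<lambda>lam. w0 - lam *\<^sub>R RG lam w0) \<longlongrightarrow> 0) at_top"
      using tendsto_diff[OF tendsto_const[of w0] RGa[rule_format, of w0]] by simp
    have inv: "((\<lambda>lam::real. 1 / lam) \<longlongrightarrow> 0) at_top" by real_asymp
    have l2: "((\<lambda>lam. (1 / lam) *\<^sub>R (lam *\<^sub>R RG lam (Am w0))) \<longlongrightarrow> 0) at_top"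
      using tendsto_scaleR[OF inv RGa[rule_format, of "Am w0"]] by simp
    have l3: "((\<lambda>lam. (w0 - lam *\<^sub>R RG lam w0) + (1 / lam) *\<^sub>R (lam *\<^sub>R RG lam (Am w0))) \<longlongrightarrow> 0) at_top"
      using tendsto_add[OF l1 l2] by simp
    show ?thesis
    proof (rule Lim_transform_eventually[OF l3])
      show "\<forall>\<^sub>F lam in at_top. (w0 - lam *\<^sub>R RG lam w0) + (1 / lam) *\<^sub>R (lam *\<^sub>R RG lam (Am w0)) = u lam"
        using eventually_gt_at_top[of "max wG 0"]
      proof (rule eventually_mono)
        fix lam :: real assume lam: "max wG 0 < lam"
        have "RG lam (lam *\<^sub>R w0 - Am w0) = lam *\<^sub>R RG lam w0 - RG lam (Am w0)"
          using bounded_linear.linear[of "RG lam"] RG lam by (simp add: linear_diff linear_scale)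
        then show "(w0 - lam *\<^sub>R RG lam w0) + (1 / lam) *\<^sub>R (lam *\<^sub>R RG lam (Am w0)) = u lam"
          unfolding u_def using lam by simp
      qed
    qed
  qed

  show ?thesis
    unfolding filterlim_at_top
  proof (intro allI)
    fix Z :: real
    define e where "e = dl / (\<bar>Z\<bar> + 1)"
    have e: "e > 0" unfolding e_def using dl by simp
    have "\<forall>\<^sub>F lam in at_top. dist (u lam) 0 < e" using ulim[unfolded tendsto_iff, rule_format, OF e] .
    moreover have "\<forall>\<^sub>F lam in at_top. lam > max wA wG" by (rule eventually_gt_at_top)
    ultimately show "\<forall>\<^sub>F lam in at_top. Z \<le> norm_L_lambda D Am L lam * onorm (\<Phi>0 \<circ> dirichlet_op D Am L lam)"
    proof eventually_elim
      case (elim lam)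
      define P where "P = norm_L_lambda D Am L lam * onorm (\<Phi>0 \<circ> dirichlet_op D Am L lam)"
      have k: "dl \<le> P * norm (u lam)" unfolding P_def using key elim by simp
      have nu: "norm (u lam) < e" using elim by simp
      have "dl = e * (\<bar>Z\<bar> + 1)" unfolding e_def by simp
      have pos: "norm (u lam) > 0"
      proof (rule ccontr)
        assume "\<not> norm (u lam) > 0"
        then have "norm (u lam) = 0" by simp
        then show False using k dl by simp
      qed
      have "(\<bar>Z\<bar> + 1) * norm (u lam) < (\<bar>Z\<bar> + 1) * e"
        using nu by (intro mult_strict_left_mono) auto
      also have "\<dots> = dl" unfolding e_def by simp
      also have "\<dots> \<le> P * norm (u lam)" by (rule k)
      finally have "\<bar>Z\<bar> + 1 < P" using pos by (simp add: mult_less_cancel_right)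
      then show ?case unfolding P_def by linarith
    qed
  qed
qed


end
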